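(* Let $n$ be such that $n/2$ is odd, let $\Omega\subseteq\mathbb{R}^n$ be open, let $\underline{f}$ be a vector-valued function on $\Omega$ and $\lambda\in\mathbb{C}$. With $A=M^{ie_N}\partial_{\underline{x}}^{-\underline{f}}$ and $B=M^{ie_N}\partial_{\underline{x}}^{\underline{f}}$ acting on $\mathbb{C}_n$-valued functions on $\Omega$, one has (i) $\ker(A\pm\lambda)=\ker\left(\partial_{\underline{x}}-M^{\underline{f}\mp\lambda ie_N}\right)$; (ii) $\ker(B\pm\lambda)=\ker\left(\partial_{\underline{x}}+M^{\underline{f}\pm\lambda ie_N}\right)$.
   Context: $\mathbb{R}_{0,n}$ is the real Clifford algebra generated by an orthonormal basis $e_1,\dots,e_n$ of $\mathbb{R}^n$ with relations $e_je_k+e_ke_j=-2\delta_{jk}$; $\mathbb{C}_n=\mathbb{R}_{0,n}\otimes\mathbb{C}$, with $i$ the complex unit. $e_N=e_1e_2\cdots e_n$ is the pseudo-scalar. The Dirac operator is $\partial_{\underline{x}}=\sum_{j=1}^n e_j\partial_{x_j}$, acting from the left. For a function $f$, $M^f$ is right multiplication: $M^fg=gf$; $\partial_{\underline{x}}^{\pm f}=\partial_{\underline{x}}\pm M^f$. *)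

theory Defs
  imports "HOL-Analysis.Analysis"
begin

text \<open>Complex Clifford algebra C_n = R_{0,n} (x) C with generators e_j, j :: 'n, where
  'n is a finite linearly ordered index type with CARD('n) = n.  An element is
  represented by its coordinates w.r.t. the blade basis e_A (A a subset of 'n, the
  product of the e_j, j in A, in increasing order).\<close>

type_synonym 'n cl = "'n set \<Rightarrow> complex"
type_synonym 'n cl_pt = "(real, 'n) vec"

definition blade_sign :: "'n::linorder set \<Rightarrow> 'n set \<Rightarrow> complex" where
  "blade_sign A B = (-1) ^ (card {(a, b). a \<in> A \<and> b \<in> B \<and> b < a} + card (A \<inter> B))"

definition cl_mult :: "'n::{finite,linorder} cl \<Rightarrow> 'n cl \<Rightarrow> 'n cl" where
  "cl_mult x y = (\<lambda>C. \<Sum>A\<in>UNIV. \<Sum>B\<in>UNIV.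
      if (A - B) \<union> (B - A) = C then blade_sign A B * x A * y B else 0)"

definition cl_add :: "'n cl \<Rightarrow> 'n cl \<Rightarrow> 'n cl" where
  "cl_add x y = (\<lambda>A. x A + y A)"

definition cl_sub :: "'n cl \<Rightarrow> 'n cl \<Rightarrow> 'n cl" where
  "cl_sub x y = (\<lambda>A. x A - y A)"

definition cl_scale :: "complex \<Rightarrow> 'n cl \<Rightarrow> 'n cl" where
  "cl_scale c x = (\<lambda>A. c * x A)"

definition cl_zero :: "'n cl" where
  "cl_zero = (\<lambda>A. 0)"

definition cl_e :: "'n \<Rightarrow> 'n cl" where
  "cl_e j = (\<lambda>A. if A = {j} then 1 else 0)"

definition i_eN :: "'n::finite cl" where
  "i_eN = (\<lambda>A. if A = UNIV then \<i> else 0)"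

definition cl_vec :: "('n \<Rightarrow> real) \<Rightarrow> 'n cl" where
  "cl_vec v = (\<lambda>A. if card A = 1 then complex_of_real (v (the_elem A)) else 0)"

definition cl_partial :: "'n::finite \<Rightarrow> ('n cl_pt \<Rightarrow> 'n cl) \<Rightarrow> 'n cl_pt \<Rightarrow> 'n cl" where
  "cl_partial j g x = (\<lambda>A. vector_derivative (\<lambda>t. g (x + t *\<^sub>R axis j 1) A) (at 0))"

definition dirac :: "(('n::{finite,linorder}) cl_pt \<Rightarrow> 'n cl) \<Rightarrow> 'n cl_pt \<Rightarrow> 'n cl" where
  "dirac g x = (\<lambda>A. \<Sum>j\<in>UNIV. cl_mult (cl_e j) (cl_partial j g x) A)"

definition rmult :: "(('n::{finite,linorder}) cl_pt \<Rightarrow> 'n cl) \<Rightarrow> ('n cl_pt \<Rightarrow> 'n cl) \<Rightarrow> 'n cl_pt \<Rightarrow> 'n cl" where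
  "rmult h g = (\<lambda>x. cl_mult (g x) (h x))"

definition cl_diff_on :: "(('n::finite) cl_pt) set \<Rightarrow> ('n cl_pt \<Rightarrow> 'n cl) \<Rightarrow> bool" where
  "cl_diff_on \<Omega> g \<longleftrightarrow> (\<forall>A. \<forall>x\<in>\<Omega>. (\<lambda>y. g y A) differentiable (at x))"

definition cl_ker :: "(('n::finite) cl_pt) set \<Rightarrow> (('n cl_pt \<Rightarrow> 'n cl) \<Rightarrow> ('n cl_pt \<Rightarrow> 'n cl))
    \<Rightarrow> ('n cl_pt \<Rightarrow> 'n cl) set" where
  "cl_ker \<Omega> L = {g. cl_diff_on \<Omega> g \<and> (\<forall>x\<in>\<Omega>. L g x = cl_zero)}"

text \<open>A = M^{i e_N} (d - M^f) and B = M^{i e_N} (d + M^f), f vector-valued\<close>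
definition opA :: "((real, 'n::{finite,linorder}) vec \<Rightarrow> ('n \<Rightarrow> real))
    \<Rightarrow> ('n cl_pt \<Rightarrow> 'n cl) \<Rightarrow> 'n cl_pt \<Rightarrow> 'n cl" where
  "opA f g x = cl_mult (cl_sub (dirac g x) (rmult (\<lambda>y. cl_vec (f y)) g x)) i_eN"

definition opB :: "((real, 'n::{finite,linorder}) vec \<Rightarrow> ('n \<Rightarrow> real))
    \<Rightarrow> ('n cl_pt \<Rightarrow> 'n cl) \<Rightarrow> 'n cl_pt \<Rightarrow> 'n cl" where
  "opB f g x = cl_mult (cl_add (dirac g x) (rmult (\<lambda>y. cl_vec (f y)) g x)) i_eN"

end

theory Submission
  imports Defs
begin

lemma mult_ieN: "cl_mult x i_eN C = blade_sign (- C) UNIV * x (- C) * \<i>"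
proof -
  have "cl_mult x i_eN C = (\<Sum>A\<in>UNIV. \<Sum>B\<in>UNIV. if B = UNIV then
      (if (A - B) \<union> (B - A) = C then blade_sign A B * x A * \<i> else 0) else 0)"
    unfolding cl_mult_def i_eN_def by (intro sum.cong refl) auto
  also have "\<dots> = (\<Sum>A\<in>UNIV. if A = - C then blade_sign A UNIV * x A * \<i> else 0)"
    by (intro sum.cong refl) (auto simp: sum.delta')
  also have "\<dots> = blade_sign (- C) UNIV * x (- C) * \<i>"
    by (simp add: sum.delta')
  finally show ?thesis .
qed

lemma card_UNIV_prod: "card (UNIV :: ('a::finite \<times> 'b::finite) set) = CARD('a) * CARD('b)"
  by (metis UNIV_Times_UNIV card_cartesian_product)


lemma card_lt_pairs: "2 * card {(a, b::'n::{finite,linorder}). b < a} + CARD('n) = CARD('n) * CARD('n)"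
proof -
  let ?P = "{(a, b::'n). b < a}" and ?Q = "{(a, b::'n). a < b}" and ?D = "{(a, b::'n). a = b}"
  have U: "(UNIV :: ('n \<times> 'n) set) = ?P \<union> ?Q \<union> ?D" by auto
  have "card ?Q = card ?P"
    by (rule bij_betw_same_card[of "\<lambda>(a,b). (b,a)"]) (auto simp: bij_betw_def inj_on_def image_def)
  moreover have "card ?D = CARD('n)"
    by (rule bij_betw_same_card[of "\<lambda>(a,b). a"]) (auto simp: bij_betw_def inj_on_def image_def)
  moreover have "card (UNIV :: ('n \<times> 'n) set) = card (?P \<union> ?Q \<union> ?D)" using U by simp
  moreover have "card (?P \<union> ?Q \<union> ?D) = card ?P + card ?Q + card ?D"
  proof -
    have "card (?P \<union> ?Q \<union> ?D) = card (?P \<union> ?Q) + card ?D" by (rule card_Un_disjoint) auto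
    moreover have "card (?P \<union> ?Q) = card ?P + card ?Q" by (rule card_Un_disjoint) auto
    ultimately show ?thesis by simp
  qed
  ultimately show ?thesis by (simp add: card_UNIV_prod)
qed



definition sN :: "'n::{finite,linorder} set \<Rightarrow> complex" where
  "sN C = blade_sign (- C) UNIV * \<i>"

lemma mult_ieN': "cl_mult x i_eN C = sN C * x (- C)"
  by (simp add: mult_ieN sN_def)

lemma card_split: "card {(a, b). a \<in> A \<and> b \<in> (UNIV::'n::{finite,linorder} set) \<and> b < a}
   + card {(a, b). a \<in> - A \<and> b \<in> (UNIV::'n set) \<and> b < a} = card {(a, b::'n). b < a}"
proof -
  have "{(a, b::'n). b < a} = {(a, b). a \<in> A \<and> b \<in> UNIV \<and> b < a} \<union> {(a, b). a \<in> - A \<and> b \<in> UNIV \<and> b < a}"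
    by auto
  then show ?thesis by (simp add: card_Un_disjoint[symmetric] disjoint_iff)
qed

lemma sN_inv:
  assumes "even CARD('n::{finite,linorder})" "odd (CARD('n) div 2)"
  shows "sN (C::'n set) * sN (- C) = 1"
proof -
  let ?cP = "card {(a, b::'n). b < a}"
  obtain k where k: "CARD('n) = 2 * k" using assms(1) by blast
  have ok: "odd k" using assms(2) k by simp
  have "2 * ?cP + 2 * k = 2 * k * (2 * k)" using card_lt_pairs[where 'n='n] k by simp
  then have "?cP + k = 2 * (k * k)" by simp
  then have ev: "even (?cP + k)" by presburger
  have odd: "odd (?cP + CARD('n))" using ev ok k by simp
  have cc: "card C + card (- C) = CARD('n)"
  proof -
    have "card (C \<union> - C) = card C + card (- C)" by (rule card_Un_disjoint) auto
    then show ?thesis by simp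
  qed
  have "blade_sign (- C) UNIV * blade_sign C UNIV = (-1) ^ (?cP + CARD('n))"
    unfolding blade_sign_def using card_split[of C] card_split[of "-C"] cc
    by (simp add: power_add[symmetric] algebra_simps) (metis add.assoc cc)
  also have "\<dots> = -1" using odd by simp
  finally have "blade_sign (- C) UNIV * blade_sign C UNIV = -1" .
  then show ?thesis unfolding sN_def by (simp add: algebra_simps)
qed

lemma key2:
  fixes s :: "'n set \<Rightarrow> complex"
  assumes "\<And>C. s C * s (- C) = 1"
  shows "(\<forall>C. s C * Y (- C) + c * G C = 0) \<longleftrightarrow> (\<forall>C. Y C + c * (s C * G (- C)) = 0)"
proof
  assume h: "\<forall>C. s C * Y (- C) + c * G C = 0"
  show "\<forall>C. Y C + c * (s C * G (- C)) = 0"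
  proof
    fix C
    have "s (- C) * Y C + c * G (- C) = 0" using h[rule_format, of "- C"] by simp
    then have "s C * (s (- C) * Y C + c * G (- C)) = 0" by simp
    then show "Y C + c * (s C * G (- C)) = 0" using assms[of C] by (simp add: algebra_simps)
  qed
next
  assume h: "\<forall>C. Y C + c * (s C * G (- C)) = 0"
  show "\<forall>C. s C * Y (- C) + c * G C = 0"
  proof
    fix C
    have "Y (- C) + c * (s (- C) * G C) = 0" using h[rule_format, of "- C"] by simp
    then have "s C * (Y (- C) + c * (s (- C) * G C)) = 0" by simp
    then show "s C * Y (- C) + c * G C = 0" using assms[of C]
      by (simp add: algebra_simps)
  qed
qed

lemma mult_sub_r: "cl_mult x (cl_sub y z) = cl_sub (cl_mult x y) (cl_mult x z)"
  unfolding cl_mult_def cl_sub_def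
  by (auto simp: fun_eq_iff sum_subtractf[symmetric] algebra_simps intro!: sum.cong)

lemma mult_add_r: "cl_mult x (cl_add y z) = cl_add (cl_mult x y) (cl_mult x z)"
  unfolding cl_mult_def cl_add_def
  by (auto simp: fun_eq_iff sum.distrib[symmetric] algebra_simps intro!: sum.cong)

lemma mult_scale_r: "cl_mult x (cl_scale c y) = cl_scale c (cl_mult x y)"
  unfolding cl_mult_def cl_scale_def
  by (auto simp: fun_eq_iff sum_distrib_left algebra_simps intro!: sum.cong)

lemma ker_eq:
  assumes "\<And>g x. (L1 g x = cl_zero) \<longleftrightarrow> (L2 g x = cl_zero)"
  shows "cl_ker \<Omega> L1 = cl_ker \<Omega> L2"
  unfolding cl_ker_def using assms by auto

theorem lemma7p1:
  fixes \<Omega> :: "(real, 'n::{finite,linorder}) vec set"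
    and f :: "(real, 'n) vec \<Rightarrow> ('n \<Rightarrow> real)"
    and lam :: complex
  assumes "even CARD('n)" and "odd (CARD('n) div 2)"
    and "open \<Omega>"
  shows
    "cl_ker \<Omega> (\<lambda>g x. cl_add (opA f g x) (cl_scale lam (g x)))
       = cl_ker \<Omega> (\<lambda>g x. cl_sub (dirac g x)
           (rmult (\<lambda>y. cl_sub (cl_vec (f y)) (cl_scale lam i_eN)) g x)) \<and>
    cl_ker \<Omega> (\<lambda>g x. cl_sub (opA f g x) (cl_scale lam (g x)))
       = cl_ker \<Omega> (\<lambda>g x. cl_sub (dirac g x)
           (rmult (\<lambda>y. cl_add (cl_vec (f y)) (cl_scale lam i_eN)) g x)) \<and>
    cl_ker \<Omega> (\<lambda>g x. cl_add (opB f g x) (cl_scale lam (g x)))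
       = cl_ker \<Omega> (\<lambda>g x. cl_add (dirac g x)
           (rmult (\<lambda>y. cl_add (cl_vec (f y)) (cl_scale lam i_eN)) g x)) \<and>
    cl_ker \<Omega> (\<lambda>g x. cl_sub (opB f g x) (cl_scale lam (g x)))
       = cl_ker \<Omega> (\<lambda>g x. cl_add (dirac g x)
           (rmult (\<lambda>y. cl_sub (cl_vec (f y)) (cl_scale lam i_eN)) g x))"
proof -
  have s: "\<And>C. sN (C::'n set) * sN (- C) = 1" using sN_inv assms(1,2) by blast
  note K = key2[of sN, OF s]
  have z: "\<And>h. (h = cl_zero) \<longleftrightarrow> (\<forall>C. h C = 0)" by (auto simp: cl_zero_def fun_eq_iff)
  show ?thesis
  proof (intro conjI ker_eq)
    fix g x
    define Y where "Y = cl_sub (dirac g x) (rmult (\<lambda>y. cl_vec (f y)) g x)"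
    have "(cl_add (opA f g x) (cl_scale lam (g x)) = cl_zero) \<longleftrightarrow>
       (\<forall>C. sN C * Y (- C) + lam * g x C = 0)"
      by (simp add: z opA_def Y_def[symmetric] mult_ieN' cl_add_def cl_scale_def)
    also have "\<dots> \<longleftrightarrow> (\<forall>C. Y C + lam * (sN C * g x (- C)) = 0)" by (rule K)
    also have "\<dots> \<longleftrightarrow> (cl_sub (dirac g x)
           (rmult (\<lambda>y. cl_sub (cl_vec (f y)) (cl_scale lam i_eN)) g x) = cl_zero)"
      unfolding rmult_def mult_sub_r mult_add_r mult_scale_r
      by (simp add: z Y_def rmult_def mult_sub_r mult_scale_r mult_ieN' cl_sub_def cl_scale_def algebra_simps)
    finally show "(cl_add (opA f g x) (cl_scale lam (g x)) = cl_zero) \<longleftrightarrow> (cl_sub (dirac g x)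
           (rmult (\<lambda>y. cl_sub (cl_vec (f y)) (cl_scale lam i_eN)) g x) = cl_zero)" .
  next
    fix g x
    define Y where "Y = cl_sub (dirac g x) (rmult (\<lambda>y. cl_vec (f y)) g x)"
    have "(cl_sub (opA f g x) (cl_scale lam (g x)) = cl_zero) \<longleftrightarrow>
       (\<forall>C. sN C * Y (- C) + (- lam) * g x C = 0)"
      unfolding opA_def Y_def[symmetric] by (simp add: z mult_ieN' cl_sub_def cl_scale_def)
    also have "\<dots> \<longleftrightarrow> (\<forall>C. Y C + (- lam) * (sN C * g x (- C)) = 0)" by (rule K)
    also have "\<dots> \<longleftrightarrow> (cl_sub (dirac g x)
           (rmult (\<lambda>y. cl_add (cl_vec (f y)) (cl_scale lam i_eN)) g x) = cl_zero)"
      unfolding rmult_def mult_sub_r mult_add_r mult_scale_r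
      by (simp add: z Y_def rmult_def mult_add_r mult_scale_r mult_ieN' cl_add_def cl_sub_def cl_scale_def algebra_simps)
    finally show "(cl_sub (opA f g x) (cl_scale lam (g x)) = cl_zero) \<longleftrightarrow> (cl_sub (dirac g x)
           (rmult (\<lambda>y. cl_add (cl_vec (f y)) (cl_scale lam i_eN)) g x) = cl_zero)" .
  next
    fix g x
    define Y where "Y = cl_add (dirac g x) (rmult (\<lambda>y. cl_vec (f y)) g x)"
    have "(cl_add (opB f g x) (cl_scale lam (g x)) = cl_zero) \<longleftrightarrow>
       (\<forall>C. sN C * Y (- C) + lam * g x C = 0)"
      unfolding opB_def Y_def[symmetric] by (simp add: z mult_ieN' cl_add_def cl_scale_def)
    also have "\<dots> \<longleftrightarrow> (\<forall>C. Y C + lam * (sN C * g x (- C)) = 0)" by (rule K)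
    also have "\<dots> \<longleftrightarrow> (cl_add (dirac g x)
           (rmult (\<lambda>y. cl_add (cl_vec (f y)) (cl_scale lam i_eN)) g x) = cl_zero)"
      unfolding rmult_def mult_sub_r mult_add_r mult_scale_r
      by (simp add: z Y_def rmult_def mult_add_r mult_scale_r mult_ieN' cl_add_def cl_scale_def algebra_simps)
    finally show "(cl_add (opB f g x) (cl_scale lam (g x)) = cl_zero) \<longleftrightarrow> (cl_add (dirac g x)
           (rmult (\<lambda>y. cl_add (cl_vec (f y)) (cl_scale lam i_eN)) g x) = cl_zero)" .
  next
    fix g x
    define Y where "Y = cl_add (dirac g x) (rmult (\<lambda>y. cl_vec (f y)) g x)"
    have "(cl_sub (opB f g x) (cl_scale lam (g x)) = cl_zero) \<longleftrightarrow>
       (\<forall>C. sN C * Y (- C) + (- lam) * g x C = 0)"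
      unfolding opB_def Y_def[symmetric] by (simp add: z mult_ieN' cl_sub_def cl_scale_def)
    also have "\<dots> \<longleftrightarrow> (\<forall>C. Y C + (- lam) * (sN C * g x (- C)) = 0)" by (rule K)
    also have "\<dots> \<longleftrightarrow> (cl_add (dirac g x)
           (rmult (\<lambda>y. cl_sub (cl_vec (f y)) (cl_scale lam i_eN)) g x) = cl_zero)"
      unfolding rmult_def mult_sub_r mult_add_r mult_scale_r
      by (simp add: z Y_def rmult_def mult_sub_r mult_scale_r mult_ieN' cl_add_def cl_sub_def cl_scale_def algebra_simps)
    finally show "(cl_sub (opB f g x) (cl_scale lam (g x)) = cl_zero) \<longleftrightarrow> (cl_add (dirac g x)
           (rmult (\<lambda>y. cl_sub (cl_vec (f y)) (cl_scale lam i_eN)) g x) = cl_zero)" .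
  qed
qed

end
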